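(* Let $(P,\leqslant)$ be a locally finite poset having a minimum element $\hat{0}$. Suppose that for every nonempty finite subset $S \subset P$ there exists an element $z \in S$ such that there are infinitely many $x \in P$ with $x \geqslant z$ but $x \not\geqslant y$ for every $y \in S\setminus\{z\}$. Then $P$ has the Möbius uncertainty property: whenever $f,g : P \to \mathbb{C}$ are functions, neither identically zero, satisfying \[ g(z) = \sum_{x \in P,\ x \leqslant z} f(x) \quad \text{for every } z \in P, \] at least one of $\operatorname{supp}(f) = \{x \in P : f(x)\neq 0\}$ and $\operatorname{supp}(g)=\{x\in P: g(x)\neq 0\}$ is infinite.
   Context: A poset is locally finite if every interval $\{z : x \leqslant z \leqslant y\}$ is finite; in particular the sum defining $g$ is finite. *)

theory Defs
  imports "HOL-Analysis.Analysis"
begin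

text \<open>The poset P is the whole type 'a, with its partial order.\<close>

definition locally_finite_poset :: "'a::order itself \<Rightarrow> bool" where
  "locally_finite_poset _ \<longleftrightarrow> (\<forall>x y::'a. finite {z. x \<le> z \<and> z \<le> y})"

definition has_minimum :: "'a::order itself \<Rightarrow> bool" where
  "has_minimum _ \<longleftrightarrow> (\<exists>m::'a. \<forall>x. m \<le> x)"

definition supp :: "('a \<Rightarrow> complex) \<Rightarrow> 'a set" where
  "supp f = {x. f x \<noteq> 0}"

definition moebius_uncertainty :: "'a::order itself \<Rightarrow> bool" where
  "moebius_uncertainty _ \<longleftrightarrow>
     (\<forall>(f::'a \<Rightarrow> complex) g. f \<noteq> (\<lambda>_. 0) \<and> g \<noteq> (\<lambda>_. 0) \<and>
        (\<forall>z. g z = (\<Sum>x\<in>{x. x \<le> z}. f x))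
        \<longrightarrow> infinite (supp f) \<or> infinite (supp g))"

end

theory Submission
  imports Defs
begin

theorem theorem1p2:
  assumes "locally_finite_poset TYPE('a::order)"
    and "has_minimum TYPE('a)"
    and "\<forall>S::'a set. finite S \<and> S \<noteq> {} \<longrightarrow>
           (\<exists>z\<in>S. infinite {x. z \<le> x \<and> (\<forall>y\<in>S - {z}. \<not> y \<le> x)})"
  shows "moebius_uncertainty TYPE('a)"
  unfolding moebius_uncertainty_def
proof (intro allI impI)
  fix f g :: "'a \<Rightarrow> complex"
  assume H: "f \<noteq> (\<lambda>_. 0) \<and> g \<noteq> (\<lambda>_. 0) \<and> (\<forall>z. g z = (\<Sum>x\<in>{x. x \<le> z}. f x))"
  obtain m :: 'a where m: "\<And>x. m \<le> x" using assms(2) unfolding has_minimum_def by blast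
  have fin: "finite {w. w \<le> x}" for x :: 'a
  proof -
    have "{w. w \<le> x} = {w. m \<le> w \<and> w \<le> x}" using m by auto
    then show ?thesis using assms(1) unfolding locally_finite_poset_def by metis
  qed
  show "infinite (supp f) \<or> infinite (supp g)"
  proof (rule ccontr)
    assume "\<not> (infinite (supp f) \<or> infinite (supp g))"
    then have fS: "finite (supp f)" and fG: "finite (supp g)" by auto
    have ne: "supp f \<noteq> {}" using H unfolding supp_def by auto
    obtain z where zS: "z \<in> supp f" and inf: "infinite {x. z \<le> x \<and> (\<forall>y\<in>supp f - {z}. \<not> y \<le> x)}"
      using assms(3) fS ne by blast
    have "{x. z \<le> x \<and> (\<forall>y\<in>supp f - {z}. \<not> y \<le> x)} \<subseteq> supp g"
    proof
      fix x assume xin: "x \<in> {x. z \<le> x \<and> (\<forall>y\<in>supp f - {z}. \<not> y \<le> x)}"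
      have "g x = (\<Sum>w\<in>{w. w \<le> x}. f w)" using H by blast
      also have "\<dots> = (\<Sum>w\<in>{z}. f w)"
      proof (rule sum.mono_neutral_right)
        show "finite {w. w \<le> x}" by (rule fin)
        show "{z} \<subseteq> {w. w \<le> x}" using xin by auto
        show "\<forall>i\<in>{w. w \<le> x} - {z}. f i = 0" using xin unfolding supp_def by auto
      qed
      also have "\<dots> = f z" by simp
      finally show "x \<in> supp g" using zS unfolding supp_def by simp
    qed
    then show False using inf fG finite_subset by blast
  qed
qed

end
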